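(* The function $$G:\lambda_{Lag}\mapsto\int_0^\infty e^{-\lambda s}\left(U\Big((U')^{-1}\big(\tfrac{1}{\lambda_{Lag}}e^{(\lambda-\delta)s}\big)\Big)-h\Big(\big(\tfrac{h'}{\varphi'}\big)^{-1}\big(\tfrac{1}{\lambda_{Lag}}e^{(\lambda-\delta)s}\big)\vee 0\Big)\right)ds$$ is increasing on $(0,\infty)$.
   Context: Standing assumptions: $\varphi:[0,\infty)\to[0,\infty)$ is $C^2$, strictly concave, bounded, increasing, $\varphi(0)=0$, $\varphi'(0)>0$; $U:[0,\infty)\to[0,\infty)$ is $C^2$, strictly concave, increasing, $U(0)=0$, $\lim_{x\to\infty}U'(x)=0$, $\lim_{x\to0}U'(x)=\infty$; $h:[0,\infty)\to[0,\infty)$ is $C^2$, strictly convex, increasing, $h(0)=0$, $h'(0)>0$; $\lambda\ge\delta>0$ are constants. The notation $(h'/\varphi')^{-1}(y)\vee0$ means the inverse of the increasing function $h'/\varphi'$ at $y$ when defined and nonnegative, and $0$ otherwise. *)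

theory Defs
  imports "HOL-Analysis.Analysis"
begin

definition strict_convex_on :: "real set \<Rightarrow> (real \<Rightarrow> real) \<Rightarrow> bool" where
  "strict_convex_on S f \<longleftrightarrow> convex S \<and>
    (\<forall>x\<in>S. \<forall>y\<in>S. \<forall>u. x \<noteq> y \<and> 0 < u \<and> u < 1 \<longrightarrow>
       f (u * x + (1 - u) * y) < u * f x + (1 - u) * f y)"

definition strict_concave_on :: "real set \<Rightarrow> (real \<Rightarrow> real) \<Rightarrow> bool" where
  "strict_concave_on S f \<longleftrightarrow> strict_convex_on S (\<lambda>x. - f x)"

definition inv_pos :: "(real \<Rightarrow> real) \<Rightarrow> real \<Rightarrow> real" where
  "inv_pos f y = (if \<exists>x>0. f x = y then (THE x. x > 0 \<and> f x = y) else 0)"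

text \<open>Inverse of a function on [0,\<infinity>) at y when defined (and nonnegative), 0 otherwise:
  this is (f)^-1(y) \<or> 0 in the paper's notation.\<close>
definition inv_nonneg_or_zero :: "(real \<Rightarrow> real) \<Rightarrow> real \<Rightarrow> real" where
  "inv_nonneg_or_zero f y = (if \<exists>x\<ge>0. f x = y then (THE x. x \<ge> 0 \<and> f x = y) else 0)"

end

theory Submission imports Defs begin

lemma sc_imp_convex: "strict_convex_on S f \<Longrightarrow> convex_on S f"
  unfolding convex_on_def
proof safe
  assume sc: "strict_convex_on S f"
  then show "convex S" unfolding strict_convex_on_def by auto
  fix x y u v assume H: "x \<in> S" "y \<in> S" "(0::real) \<le> u" "0 \<le> v" "u + v = 1"
  show "f (u *\<^sub>R x + v *\<^sub>R y) \<le> u * f x + v * f y"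
  proof (cases "x = y \<or> u = 0 \<or> v = 0")
    case True
    have v: "v = 1 - u" using H by simp
    show ?thesis
    proof (cases "x = y")
      case True
      have e1: "u *\<^sub>R x + v *\<^sub>R y = (u+v)*x" using True by (simp add: distrib_right)
      have e2: "u * f x + v * f y = (u+v) * f x" using True by (simp add: distrib_right)
      show ?thesis using e1 e2 H(5) by simp
    next
      case False
      then have "u = 0 \<or> v = 0" using \<open>x = y \<or> u = 0 \<or> v = 0\<close> by auto
      then show ?thesis using v by auto
    qed
  next
    case False
    then have "0 < u" "u < 1" "v = 1 - u" using H by auto
    then show ?thesis using sc H(1,2) False unfolding strict_convex_on_def \<open>v = 1 - u\<close>
      by (auto intro!: less_imp_le)
  qed
qed

lemma slope_sym: "((f::real\<Rightarrow>real) c - f y) / (c - y) = (f y - f c) / (y - c)"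
  by (metis minus_diff_eq minus_divide_divide)

lemma deriv_le_slope:
  fixes f :: "real \<Rightarrow> real"
  assumes cv: "convex_on S f" and c: "c \<in> S" and x: "x \<in> S" and cx: "c < x"
    and d: "(f has_real_derivative d) (at c within S)"
  shows "d \<le> (f x - f c) / (x - c)"
proof -
  have sub: "{c<..<x} \<subseteq> S"
    using connected_contains_Icc[OF convex_connected[OF convex_on_imp_convex[OF cv]] c x] by auto
  have eq: "at c within {c<..<x} = at_right c"
    by (rule at_within_nhd[of _ "{..<x}"]) (use cx in auto)
  have "((\<lambda>y. (f y - f c) / (y - c)) \<longlongrightarrow> d) (at c within S)"
    using d unfolding has_field_derivative_iff by simp
  then have "((\<lambda>y. (f y - f c) / (y - c)) \<longlongrightarrow> d) (at c within {c<..<x})"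
    by (rule tendsto_within_subset[OF _ sub])
  then have lim: "((\<lambda>y. (f y - f c) / (y - c)) \<longlongrightarrow> d) (at_right c)"
    unfolding eq .
  have "eventually (\<lambda>y. (f y - f c) / (y - c) \<le> (f x - f c) / (x - c)) (at_right c)"
    using eventually_at_right_real[OF cx]
  proof eventually_elim
    case (elim y)
    then have "(f c - f y) / (c - y) \<le> (f c - f x) / (c - x)"
      using convex_on_slope_le(1)[OF cv c x, of y] by auto
    then show ?case by (simp only: slope_sym)
  qed
  with lim show ?thesis
    by (intro tendsto_upperbound) auto
qed

lemma slope_le_deriv:
  fixes f :: "real \<Rightarrow> real"
  assumes cv: "convex_on S f" and c: "c \<in> S" and x: "x \<in> S" and cx: "x < c"
    and d: "(f has_real_derivative d) (at c within S)"
  shows "(f c - f x) / (c - x) \<le> d"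
proof -
  have sub: "{x<..<c} \<subseteq> S"
    using connected_contains_Icc[OF convex_connected[OF convex_on_imp_convex[OF cv]] x c] by auto
  have eq: "at c within {x<..<c} = at_left c"
    by (rule at_within_nhd[of _ "{x<..}"]) (use cx in auto)
  have "((\<lambda>y. (f y - f c) / (y - c)) \<longlongrightarrow> d) (at c within S)"
    using d unfolding has_field_derivative_iff by simp
  then have "((\<lambda>y. (f y - f c) / (y - c)) \<longlongrightarrow> d) (at c within {x<..<c})"
    by (rule tendsto_within_subset[OF _ sub])
  then have lim: "((\<lambda>y. (f y - f c) / (y - c)) \<longlongrightarrow> d) (at_left c)"
    unfolding eq .
  have "eventually (\<lambda>y. (f c - f x) / (c - x) \<le> (f y - f c) / (y - c)) (at_left c)"
    using eventually_at_left_real[OF cx]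
  proof eventually_elim
    case (elim y)
    then have "(f x - f c) / (x - c) \<le> (f y - f c) / (y - c)"
      using convex_on_slope_le(2)[OF cv x c, of y] by auto
    then show ?case by (simp only: slope_sym)
  qed
  with lim show ?thesis
    by (intro tendsto_lowerbound) auto
qed

lemma sc_deriv_strict:
  fixes f :: "real \<Rightarrow> real"
  assumes sc: "strict_convex_on S f" and x: "x \<in> S" and y: "y \<in> S" and xy: "x < y"
    and dx: "(f has_real_derivative a) (at x within S)"
    and dy: "(f has_real_derivative b) (at y within S)"
  shows "a < b"
proof -
  define m where "m = (x + y) / 2"
  have cv: "convex_on S f" using sc_imp_convex[OF sc] .
  have m: "x < m" "m < y" using xy unfolding m_def by auto
  have mS: "m \<in> S"
    using connected_contains_Icc[OF convex_connected[OF convex_on_imp_convex[OF cv]] x y] m by auto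
  from sc x y have A: "\<forall>u. x \<noteq> y \<and> 0 < u \<and> u < 1 \<longrightarrow> f (u*x+(1-u)*y) < u*f x+(1-u)*f y"
    unfolding strict_convex_on_def by blast
  have fm: "f m < (f x + f y) / 2" using A[rule_format, of "1/2"] xy unfolding m_def
    by (simp add: add_divide_distrib)
  have "a \<le> (f m - f x) / (m - x)" using deriv_le_slope[OF cv x mS m(1) dx] .
  also have "\<dots> < (f y - f m) / (y - m)"
  proof -
    have t: "m - x = y - m" "y - m > 0" unfolding m_def using xy by (simp_all add: field_simps)
    have "f m - f x < f y - f m" using fm by (simp add: field_simps)
    then have "(f m - f x) / (y - m) < (f y - f m) / (y - m)"
      using t(2) by (rule divide_strict_right_mono)
    then show ?thesis unfolding t(1) .
  qed
  also have "\<dots> \<le> b" using slope_le_deriv[OF cv y mS m(2) dy] .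
  finally show ?thesis .
qed

theorem lemma3p5:
  fixes \<phi> \<phi>' \<phi>'' U U' U'' h h' h'' :: "real \<Rightarrow> real" and lam del :: real
  assumes phi_d1: "\<And>x. x \<ge> 0 \<Longrightarrow> (\<phi> has_real_derivative \<phi>' x) (at x within {0..})"
    and phi_d2: "\<And>x. x \<ge> 0 \<Longrightarrow> (\<phi>' has_real_derivative \<phi>'' x) (at x within {0..})"
    and phi_C2: "continuous_on {0..} \<phi>''"
    and phi_nonneg: "\<And>x. x \<ge> 0 \<Longrightarrow> \<phi> x \<ge> 0"
    and phi_conc: "strict_concave_on {0..} \<phi>"
    and phi_bdd: "bounded (\<phi> ` {0..})"
    and phi_mono: "mono_on {0..} \<phi>"
    and phi0: "\<phi> 0 = 0"
    and phi'0: "\<phi>' 0 > 0"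
    and U_cont: "continuous_on {0..} U"
    and U_d1: "\<And>x. x > 0 \<Longrightarrow> (U has_real_derivative U' x) (at x)"
    and U_d2: "\<And>x. x > 0 \<Longrightarrow> (U' has_real_derivative U'' x) (at x)"
    and U_C2: "continuous_on {0<..} U''"
    and U_nonneg: "\<And>x. x \<ge> 0 \<Longrightarrow> U x \<ge> 0"
    and U_conc: "strict_concave_on {0..} U"
    and U_mono: "mono_on {0..} U"
    and U0: "U 0 = 0"
    and U'_inf: "(U' \<longlongrightarrow> 0) at_top"
    and U'_0: "filterlim U' at_top (at_right 0)"
    and h_d1: "\<And>x. x \<ge> 0 \<Longrightarrow> (h has_real_derivative h' x) (at x within {0..})"
    and h_d2: "\<And>x. x \<ge> 0 \<Longrightarrow> (h' has_real_derivative h'' x) (at x within {0..})"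
    and h_C2: "continuous_on {0..} h''"
    and h_nonneg: "\<And>x. x \<ge> 0 \<Longrightarrow> h x \<ge> 0"
    and h_conv: "strict_convex_on {0..} h"
    and h_mono: "mono_on {0..} h"
    and h0: "h 0 = 0"
    and h'0: "h' 0 > 0"
    and del_pos: "0 < del"
    and lam_ge: "del \<le> lam"
    and integrable: "\<And>L. L > 0 \<Longrightarrow> set_integrable lborel {0..}
        (\<lambda>s. exp (- lam * s) *
           (U (inv_pos U' (exp ((lam - del) * s) / L))
            - h (inv_nonneg_or_zero (\<lambda>x. h' x / \<phi>' x) (exp ((lam - del) * s) / L))))"
  shows "mono_on {0<..}
     (\<lambda>L. LBINT s:{0..}. exp (- lam * s) *
           (U (inv_pos U' (exp ((lam - del) * s) / L))
            - h (inv_nonneg_or_zero (\<lambda>x. h' x / \<phi>' x) (exp ((lam - del) * s) / L))))"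
proof -
  have U'_strict: "U' y < U' x" if "0 < x" "x < y" for x y
  proof -
    have sc: "strict_convex_on {0..} (\<lambda>x. - U x)" using U_conc unfolding strict_concave_on_def .
    have "- U' x < - U' y"
    proof (rule sc_deriv_strict[OF sc, of x y])
      show "((\<lambda>x. - U x) has_real_derivative - U' x) (at x within {0..})"
        using has_field_derivative_at_within[OF DERIV_minus[OF U_d1]] that by simp
      show "((\<lambda>x. - U x) has_real_derivative - U' y) (at y within {0..})"
        using has_field_derivative_at_within[OF DERIV_minus[OF U_d1]] that by simp
    qed (use that in auto)
    then show ?thesis by simp
  qed
  have U'_cont: "continuous_on {0<..} U'"
    by (rule DERIV_continuous_on[of _ _ U'']) (use has_field_derivative_at_within[OF U_d2] in auto)
  have U'_ex: "\<exists>x>0. U' x = y" if y: "y > 0" for y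
  proof -
    have "eventually (\<lambda>x. y \<le> U' x) (at_right (0::real))"
      using U'_0 unfolding filterlim_at_top by auto
    moreover have "eventually (\<lambda>x. x \<in> {0<..<(1::real)}) (at_right 0)"
      using eventually_at_right_real[of 0 1] by simp
    ultimately have "eventually (\<lambda>x. y \<le> U' x \<and> x \<in> {0<..<(1::real)}) (at_right 0)"
      by (rule eventually_conj)
    then obtain a where a: "y \<le> U' a" "0 < a"
      using eventually_happens[of _ "at_right (0::real)"] by auto
    have "eventually (\<lambda>x. U' x < y) at_top" using order_tendstoD(2)[OF U'_inf y] .
    moreover have "eventually (\<lambda>x. a \<le> x) at_top" by (rule eventually_ge_at_top)
    ultimately have "eventually (\<lambda>x. U' x < y \<and> a \<le> x) at_top"
      by (rule eventually_conj)
    then obtain b where b: "U' b < y" "a \<le> b"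
      using eventually_happens[of _ "at_top::real filter"] by auto
    have "continuous_on {a..b} U'"
      by (rule continuous_on_subset[OF U'_cont]) (use a(2) in auto)
    then obtain x where "a \<le> x" "x \<le> b" "U' x = y"
      using IVT2'[of U' b y a] a b by auto
    then show ?thesis using a(2) by (intro exI[of _ x]) auto
  qed
  have I_char: "inv_pos U' y > 0 \<and> U' (inv_pos U' y) = y" if y: "y > 0" for y
  proof -
    obtain x where x: "x > 0" "U' x = y" using U'_ex[OF y] by auto
    have uq: "\<exists>!x. x > 0 \<and> U' x = y"
    proof (rule ex1I[of _ x])
      show "x > 0 \<and> U' x = y" using x by auto
      fix x' assume x': "x' > 0 \<and> U' x' = y"
      show "x' = x"
      proof (rule ccontr)
        assume "x' \<noteq> x"
        then have "x' < x \<or> x < x'" by auto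
        then show False using U'_strict x x' by force
      qed
    qed
    have "inv_pos U' y = (THE x. x > 0 \<and> U' x = y)"
      unfolding inv_pos_def using x by auto
    then show ?thesis using theI'[OF uq] by simp
  qed
  have I_anti: "inv_pos U' y2 \<le> inv_pos U' y1" if "0 < y1" "y1 \<le> y2" for y1 y2
  proof (rule ccontr)
    assume "\<not> ?thesis"
    then have "inv_pos U' y1 < inv_pos U' y2" by simp
    moreover have "0 < inv_pos U' y1" "U' (inv_pos U' y1) = y1" using I_char[of y1] that by auto
    moreover have "U' (inv_pos U' y2) = y2" using I_char[of y2] that by auto
    ultimately have "y2 < y1" using U'_strict[of "inv_pos U' y1" "inv_pos U' y2"] by simp
    then show False using that by simp
  qed
  have Upart: "U (inv_pos U' y1) \<le> U (inv_pos U' y2)" if "0 < y2" "y2 \<le> y1" for y1 y2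
    using mono_onD[OF U_mono, of "inv_pos U' y1" "inv_pos U' y2"] I_char[of y1] I_char[of y2]
      I_anti[OF that] that by auto
  have phi'_strict: "\<phi>' y < \<phi>' x" if "0 \<le> x" "x < y" for x y
  proof -
    have sc: "strict_convex_on {0..} (\<lambda>x. - \<phi> x)" using phi_conc unfolding strict_concave_on_def .
    have "- \<phi>' x < - \<phi>' y"
      by (rule sc_deriv_strict[OF sc, of x y]) (use that in \<open>auto intro!: DERIV_minus phi_d1\<close>)
    then show ?thesis by simp
  qed
  have h'_strict: "h' x < h' y" if "0 \<le> x" "x < y" for x y
    by (rule sc_deriv_strict[OF h_conv, of x y]) (use that in \<open>auto intro!: h_d1\<close>)
  have cvphi: "convex_on {0..} (\<lambda>x. - \<phi> x)"
    using sc_imp_convex phi_conc unfolding strict_concave_on_def by blast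
  have phi'_nonneg: "\<phi>' x \<ge> 0" if "x \<ge> 0" for x
  proof -
    have "- \<phi>' x \<le> ((- \<phi> (x+1)) - (- \<phi> x)) / ((x + 1) - x)"
      by (rule deriv_le_slope[OF cvphi]) (use that in \<open>auto intro!: DERIV_minus phi_d1\<close>)
    moreover have "\<phi> x \<le> \<phi> (x+1)" using mono_onD[OF phi_mono, of x "x+1"] that by auto
    ultimately show ?thesis by simp
  qed
  have phi'_pos: "\<phi>' x > 0" if "x \<ge> 0" for x
    using phi'_strict[of x "x+1"] phi'_nonneg[of "x+1"] that by auto
  have h'_pos: "h' x > 0" if "x \<ge> 0" for x
    using h'_strict[of 0 x] h'0 that by (cases "x = 0") auto
  define g where "g = (\<lambda>x. h' x / \<phi>' x)"
  have g_strict: "g x < g y" if "0 \<le> x" "x < y" for x y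
  proof -
    have "h' x * \<phi>' y < h' y * \<phi>' x"
      by (rule mult_strict_mono) (use that h'_strict phi'_strict h'_pos phi'_pos in \<open>auto intro: less_imp_le\<close>)
    then show ?thesis unfolding g_def using phi'_pos[of x] phi'_pos[of y] that
      by (simp add: divide_simps)
  qed
  have g_cont: "continuous_on {0..} g"
  proof -
    have "continuous_on {0..} h'"
      by (rule DERIV_continuous_on[of _ _ h'']) (auto intro!: h_d2)
    moreover have "continuous_on {0..} \<phi>'"
      by (rule DERIV_continuous_on[of _ _ \<phi>'']) (auto intro!: phi_d2)
    ultimately show ?thesis unfolding g_def
      using phi'_pos by (intro continuous_on_divide) (auto, metis less_irrefl)
  qed
  have phi_slope: "\<phi>' x \<le> \<phi> x / x" if "x > 0" for x
  proof -
    have "((- \<phi> x) - (- \<phi> 0)) / (x - 0) \<le> - \<phi>' x"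
      by (rule slope_le_deriv[OF cvphi]) (use that in \<open>auto intro!: DERIV_minus phi_d1\<close>)
    moreover have "((- \<phi> x) - (- \<phi> 0)) / (x - 0) = - (\<phi> x / x)" using phi0 by simp
    ultimately show ?thesis by linarith
  qed
  have g_unb: "\<exists>x\<ge>0. y \<le> g x" for y
  proof (rule ccontr)
    assume "\<not> ?thesis"
    then have lt: "g x < y" if "x \<ge> 0" for x using that by force
    have g0: "g 0 > 0" unfolding g_def using h'0 phi'_pos[of 0] by simp
    have ypos: "y > 0" using lt[of 0] g0 by simp
    define c where "c = h' 0 / y"
    have cpos: "c > 0" unfolding c_def using h'0 ypos by simp
    have phi'c: "\<phi>' x > c" if "x \<ge> 0" for x
    proof -
      have "h' x / \<phi>' x < y" using lt[OF that] unfolding g_def .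
      then have "h' x < y * \<phi>' x" using phi'_pos[OF that] by (simp add: divide_simps)
      moreover have "h' 0 \<le> h' x" using h'_strict[of 0 x] that by (cases "x = 0") auto
      ultimately have "h' 0 < y * \<phi>' x" by simp
      then show ?thesis unfolding c_def using ypos by (simp add: divide_simps mult.commute)
    qed
    obtain B where B: "\<And>x. x \<in> \<phi> ` {0..} \<Longrightarrow> norm x \<le> B"
      using phi_bdd unfolding bounded_iff by auto
    define x where "x = (\<bar>B\<bar> + 1) / c"
    have xpos: "x > 0" unfolding x_def using cpos by simp
    have "c * x < \<phi>' x * x" using phi'c[of x] xpos by simp
    also have "\<phi>' x * x \<le> \<phi> x" using phi_slope[OF xpos] xpos by (simp add: divide_simps)
    finally have "\<bar>B\<bar> + 1 < \<phi> x" unfolding x_def using cpos by simp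
    moreover have "norm (\<phi> x) \<le> B" using B[of "\<phi> x"] xpos by auto
    ultimately show False by simp
  qed
  have g_uq: "x = x'" if "x \<ge> 0" "x' \<ge> 0" "g x = g x'" for x x'
  proof (rule ccontr)
    assume "x \<noteq> x'"
    then have "x < x' \<or> x' < x" by auto
    then show False using g_strict that by force
  qed
  have J_eq: "inv_nonneg_or_zero (\<lambda>x. h' x / \<phi>' x) y = x" if "x \<ge> 0" "g x = y" for x y
  proof -
    have uq: "\<exists>!x. x \<ge> 0 \<and> g x = y" using that g_uq by blast
    have "(THE x. x \<ge> 0 \<and> g x = y) = x" using the1_equality[OF uq] that by auto
    then show ?thesis unfolding inv_nonneg_or_zero_def g_def[symmetric] using that by auto
  qed
  have J_nonneg: "inv_nonneg_or_zero (\<lambda>x. h' x / \<phi>' x) y \<ge> 0" for y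
  proof (cases "\<exists>x\<ge>0. g x = y")
    case True
    then obtain x where "x \<ge> 0" "g x = y" by auto
    then show ?thesis using J_eq by simp
  next
    case False
    show ?thesis unfolding inv_nonneg_or_zero_def g_def[symmetric] by (subst if_not_P[OF False]) simp
  qed
  have hpart: "h (inv_nonneg_or_zero (\<lambda>x. h' x / \<phi>' x) y1) \<le> h (inv_nonneg_or_zero (\<lambda>x. h' x / \<phi>' x) y2)"
    if y12: "y1 \<le> y2" for y1 y2
  proof (cases "\<exists>x\<ge>0. g x = y1")
    case False
    have "inv_nonneg_or_zero (\<lambda>x. h' x / \<phi>' x) y1 = 0"
      unfolding inv_nonneg_or_zero_def g_def[symmetric] by (subst if_not_P[OF False]) simp
    then show ?thesis using h0 h_nonneg J_nonneg by simp
  next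
    case True
    then obtain x1 where x1: "x1 \<ge> 0" "g x1 = y1" by auto
    obtain x where x: "x \<ge> 0" "y2 \<le> g x" using g_unb by auto
    have "x1 \<le> x"
    proof (rule ccontr)
      assume "\<not> x1 \<le> x"
      then have "g x < g x1" using g_strict x by simp
      then show False using x x1 y12 by simp
    qed
    moreover have "continuous_on {x1..x} g" by (rule continuous_on_subset[OF g_cont]) (use x1 in auto)
    ultimately obtain x2 where x2: "x1 \<le> x2" "x2 \<le> x" "g x2 = y2"
      using IVT'[of g x1 y2 x] x1 x y12 by auto
    have "h x1 \<le> h x2" using mono_onD[OF h_mono] x1 x2 by auto
    then show ?thesis using J_eq[OF x1] J_eq[of x2 y2] x1 x2 by simp
  qed
  show ?thesis
  proof (rule mono_onI)
    fix L1 L2 :: real assume L: "L1 \<in> {0<..}" "L2 \<in> {0<..}" "L1 \<le> L2"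
    show "(LBINT s:{0..}. exp (- lam * s) *
           (U (inv_pos U' (exp ((lam - del) * s) / L1))
            - h (inv_nonneg_or_zero (\<lambda>x. h' x / \<phi>' x) (exp ((lam - del) * s) / L1))))
        \<le> (LBINT s:{0..}. exp (- lam * s) *
           (U (inv_pos U' (exp ((lam - del) * s) / L2))
            - h (inv_nonneg_or_zero (\<lambda>x. h' x / \<phi>' x) (exp ((lam - del) * s) / L2))))"
    proof (rule set_integral_mono[OF integrable integrable])
      show "L1 > 0" "L2 > 0" using L by auto
      fix s :: real
      define e where "e = exp ((lam - del) * s)"
      have epos: "e > 0" unfolding e_def by simp
      have yy: "e / L2 \<le> e / L1" "e / L2 > 0"
        using epos L by (auto intro!: divide_left_mono)
      have "U (inv_pos U' (e / L1)) - h (inv_nonneg_or_zero (\<lambda>x. h' x / \<phi>' x) (e / L1))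
          \<le> U (inv_pos U' (e / L2)) - h (inv_nonneg_or_zero (\<lambda>x. h' x / \<phi>' x) (e / L2))"
        using Upart[OF yy(2) yy(1)] hpart[OF yy(1)] by linarith
      then show "exp (- lam * s) *
           (U (inv_pos U' (exp ((lam - del) * s) / L1))
            - h (inv_nonneg_or_zero (\<lambda>x. h' x / \<phi>' x) (exp ((lam - del) * s) / L1)))
        \<le> exp (- lam * s) *
           (U (inv_pos U' (exp ((lam - del) * s) / L2))
            - h (inv_nonneg_or_zero (\<lambda>x. h' x / \<phi>' x) (exp ((lam - del) * s) / L2)))"
        unfolding e_def by (intro mult_left_mono) auto
    qed
  qed
qed

end
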